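(* Let $0\le p<1$, let $n,k$ be integers with $1\le k\le n$, and let $\mathcal C_0\subseteq\{0,1\}^n$ be a binary linear maximum distance separable (MDS) code of length $n$ and dimension $n-k$. Consider the coset wiretap coding scheme in which the $2^k$ messages $m\in\mathcal M$ (with $M$ uniform on $\mathcal M$, $|\mathcal M|=2^k$) are put in bijection with the $2^k$ cosets $\mathcal C_0(\mathbf m)$ of $\mathcal C_0$ in $\{0,1\}^n$, and to send message $m$ the encoder transmits a codeword $\mathbf X$ chosen uniformly at random from the coset $\mathcal C_0(\mathbf m)$. Let $\mathbf Z\in\{0,1,2\}^n$ be the eavesdropper's output when $\mathbf X$ is sent over $n$ independent uses of a binary erasure channel with erasure probability $p$. Then \[ d_{TV}\bigl(P_{M,\mathbf Z},\,\mathrm U_{\mathcal M}P_{\mathbf Z}\bigr)\;=\;\sum_{e=0}^{k-1}\Bigl(1-\frac{1}{2^{\,k-e}}\Bigr)\binom{n}{e}p^e(1-p)^{n-e}. \]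
   Context: The binary erasure channel with erasure probability $p$ maps input $x\in\{0,1\}$ to output $x$ with probability $1-p$ and to the erasure symbol $2$ with probability $p$, independently across the $n$ uses. An $[n,n-k]$ linear code is MDS if its minimum Hamming distance equals $k+1$. $d_{TV}(P,Q)=\tfrac12\sum_x|P(x)-Q(x)|$ denotes total variation distance, and $\mathrm U_{\mathcal M}$ is the uniform distribution on $\mathcal M$. *)

theory Defs
  imports Complex_Main
begin

text \<open>Binary words of length n are lists over {0,1}; channel outputs are lists over {0,1,2}
  (2 = erasure symbol).\<close>

definition bin_words :: "nat \<Rightarrow> nat list set" where
  "bin_words n = {x. length x = n \<and> set x \<subseteq> {0,1}}"

definition out_words :: "nat \<Rightarrow> nat list set" where
  "out_words n = {z. length z = n \<and> set z \<subseteq> {0,1,2}}"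

definition vadd :: "nat list \<Rightarrow> nat list \<Rightarrow> nat list" where
  "vadd x y = map2 (\<lambda>a b. (a + b) mod 2) x y"

definition hamming :: "nat list \<Rightarrow> nat list \<Rightarrow> nat" where
  "hamming x y = card {i. i < length x \<and> x ! i \<noteq> y ! i}"

definition binary_linear_code :: "nat \<Rightarrow> nat list set \<Rightarrow> bool" where
  "binary_linear_code n C \<longleftrightarrow> C \<subseteq> bin_words n \<and> replicate n 0 \<in> C \<and>
     (\<forall>x\<in>C. \<forall>y\<in>C. vadd x y \<in> C)"

definition code_dim :: "nat list set \<Rightarrow> nat \<Rightarrow> bool" where
  "code_dim C d \<longleftrightarrow> card C = 2 ^ d"

text \<open>Minimum Hamming distance; for the trivial code {0} we use the standard
  convention n+1 (so that the [n,0] code is MDS).\<close>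
definition min_dist :: "nat \<Rightarrow> nat list set \<Rightarrow> nat" where
  "min_dist n C = Min ({hamming x y | x y. x \<in> C \<and> y \<in> C \<and> x \<noteq> y} \<union> {n + 1})"

definition coset :: "nat list set \<Rightarrow> nat list \<Rightarrow> nat list set" where
  "coset C a = vadd a ` C"

definition cosets :: "nat \<Rightarrow> nat list set \<Rightarrow> nat list set set" where
  "cosets n C = coset C ` bin_words n"

definition bec :: "real \<Rightarrow> nat \<Rightarrow> nat list \<Rightarrow> nat list \<Rightarrow> real" where
  "bec p n x z = (\<Prod>i<n. if z ! i = 2 then p else if z ! i = x ! i then 1 - p else 0)"

definition joint_MZ :: "real \<Rightarrow> nat \<Rightarrow> nat list set \<Rightarrow> 'm set \<Rightarrow> ('m \<Rightarrow> nat list set)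
    \<Rightarrow> 'm \<Rightarrow> nat list \<Rightarrow> real" where
  "joint_MZ p n C msgs enc m z =
     (1 / real (card msgs)) * (\<Sum>x\<in>enc m. (1 / real (card (enc m))) * bec p n x z)"

definition marg_Z :: "real \<Rightarrow> nat \<Rightarrow> nat list set \<Rightarrow> 'm set \<Rightarrow> ('m \<Rightarrow> nat list set)
    \<Rightarrow> nat list \<Rightarrow> real" where
  "marg_Z p n C msgs enc z = (\<Sum>m\<in>msgs. joint_MZ p n C msgs enc m z)"

definition tv_leak :: "real \<Rightarrow> nat \<Rightarrow> nat list set \<Rightarrow> 'm set \<Rightarrow> ('m \<Rightarrow> nat list set) \<Rightarrow> real" where
  "tv_leak p n C msgs enc =
     (1/2) * (\<Sum>m\<in>msgs. \<Sum>z\<in>out_words n.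
        \<bar>joint_MZ p n C msgs enc m z - (1 / real (card msgs)) * marg_Z p n C msgs enc z\<bar>)"

end

theory Submission
  imports Defs
begin

lemma card_lists_nth:
  "card {xs. length xs = n \<and> (\<forall>i<n. xs!i \<in> A i)} = (\<Prod>i<n. card (A i))"
proof (induction n)
  case 0
  then show ?case by simp
next
  case (Suc n)
  let ?S = "{xs. length xs = n \<and> (\<forall>i<n. xs!i \<in> A i)}"
  have eq: "{xs. length xs = Suc n \<and> (\<forall>i<Suc n. xs!i \<in> A i)} = (\<lambda>(xs,a). xs@[a]) ` (?S \<times> A n)"
  proof (rule set_eqI, rule iffI)
    fix xs assume "xs \<in> {xs. length xs = Suc n \<and> (\<forall>i<Suc n. xs!i \<in> A i)}"
    then obtain y ys where xs: "xs = ys @ [y]" "length ys = n" and h: "\<forall>i<Suc n. xs!i \<in> A i"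
      by (auto simp: length_Suc_conv_rev)
    have "\<forall>i<n. ys!i \<in> A i" using h xs by (metis less_Suc_eq nth_append_left)
    moreover have "y \<in> A n" using h xs by (metis lessI nth_append_length)
    ultimately show "xs \<in> (\<lambda>(xs,a). xs@[a]) ` (?S \<times> A n)" using xs by force
  next
    fix xs assume "xs \<in> (\<lambda>(xs,a). xs@[a]) ` (?S \<times> A n)"
    then show "xs \<in> {xs. length xs = Suc n \<and> (\<forall>i<Suc n. xs!i \<in> A i)}"
      by (auto simp: nth_append less_Suc_eq)
  qed
  have inj: "inj_on (\<lambda>(xs,a). xs@[a]) (?S \<times> A n)"
    by (auto simp: inj_on_def)
  show ?case unfolding eq card_image[OF inj] card_cartesian_product Suc.IH by simp
qed

lemma bin_words_nth: "bin_words n = {xs. length xs = n \<and> (\<forall>i<n. xs!i \<in> {0,1})}"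
  unfolding bin_words_def by (auto simp: set_conv_nth)

lemma card_fixed:
  assumes "S \<subseteq> {..<n}" "\<forall>i\<in>S. w!i \<in> {0,1}"
  shows "card {x\<in>bin_words n. \<forall>i\<in>S. x!i = w!i} = 2 ^ (n - card S)"
proof -
  have "{x\<in>bin_words n. \<forall>i\<in>S. x!i = w!i} =
     {xs. length xs = n \<and> (\<forall>i<n. xs!i \<in> (if i \<in> S then {w!i} else {0,1}))}"
    using assms unfolding bin_words_nth by (auto split: if_splits) (metis subsetD lessThan_iff)
  hence "card {x\<in>bin_words n. \<forall>i\<in>S. x!i = w!i} = (\<Prod>i<n. card (if i \<in> S then {w!i} else {0::nat,1}))"
    by (simp add: card_lists_nth)
  also have "\<dots> = (\<Prod>i<n. if i \<in> S then 1 else 2)"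
    by (rule prod.cong) auto
  also have "\<dots> = (\<Prod>i\<in>{..<n} \<inter> S. 1) * (\<Prod>i\<in>{..<n} \<inter> - S. 2)"
    by (simp add: prod.If_cases)
  also have "{..<n} \<inter> - S = {..<n} - S" by auto
  also have "(\<Prod>i\<in>{..<n} \<inter> S. 1) * (\<Prod>i\<in>{..<n} - S. 2) = (2::nat) ^ (n - card S)"
    using assms(1) by (simp add: card_Diff_subset finite_subset)
  finally show ?thesis .
qed

definition agr :: "nat list \<Rightarrow> nat list \<Rightarrow> bool" where
  "agr z x \<longleftrightarrow> (\<forall>i<length z. z!i \<noteq> 2 \<longrightarrow> x!i = z!i)"

definition cnt :: "nat list \<Rightarrow> nat" where
  "cnt z = length (filter (\<lambda>c. c = 2) z)"

lemma out_words_Suc: "out_words (Suc n) = (\<lambda>(a,z). a#z) ` ({0,1,2} \<times> out_words n)"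
  unfolding out_words_def by (auto simp: length_Suc_conv)

lemma sum_out_words:
  fixes g :: "nat \<Rightarrow> real"
  shows "(\<Sum>z\<in>out_words n. g (cnt z)) = (\<Sum>e\<le>n. real (n choose e) * 2^(n-e) * g e)"
proof (induction n arbitrary: g)
  case 0
  have "out_words 0 = {[]}" by (auto simp: out_words_def)
  then show ?case by (simp add: cnt_def)
next
  case (Suc n)
  have inj: "inj_on (\<lambda>(a,z). a#z) ({0::nat,1,2} \<times> out_words n)" by (auto simp: inj_on_def)
  have "(\<Sum>z\<in>out_words (Suc n). g (cnt z)) = (\<Sum>(a,z)\<in>{0::nat,1,2} \<times> out_words n. g (cnt (a#z)))"
    unfolding out_words_Suc by (subst sum.reindex[OF inj]) (simp add: case_prod_beta')
  also have "\<dots> = (\<Sum>a\<in>{0::nat,1,2}. \<Sum>z\<in>out_words n. g (cnt (a#z)))"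
    by (rule sum.cartesian_product[symmetric])
  also have "\<dots> = (\<Sum>z\<in>out_words n. 2 * g (cnt z) + g (Suc (cnt z)))"
    by (simp add: cnt_def sum.distrib sum_distrib_left)
  also have "\<dots> = (\<Sum>e\<le>n. real (n choose e) * 2^(n-e) * (2 * g e + g (Suc e)))"
    using Suc.IH[of "\<lambda>e. 2 * g e + g (Suc e)"] by simp
  also have "\<dots> = (\<Sum>e\<le>n. real (n choose e) * 2^(Suc n-e) * g e)
       + (\<Sum>e\<le>n. real (n choose e) * 2^(n-e) * g (Suc e))"
    by (simp add: sum.distrib algebra_simps Suc_diff_le)
  also have "(\<Sum>e\<le>n. real (n choose e) * 2^(Suc n-e) * g e)
     = 2^Suc n * g 0 + (\<Sum>e<n. real (n choose Suc e) * 2^(n-e) * g (Suc e))"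
    by (subst sum.atMost_shift) simp
  also have "(\<Sum>e<n. real (n choose Suc e) * 2^(n-e) * g (Suc e))
     = (\<Sum>e\<le>n. real (n choose Suc e) * 2^(n-e) * g (Suc e))"
    by (simp add: lessThan_Suc_atMost[symmetric])
  also have "2^Suc n * g 0 + (\<Sum>e\<le>n. real (n choose Suc e) * 2^(n-e) * g (Suc e))
     + (\<Sum>e\<le>n. real (n choose e) * 2^(n-e) * g (Suc e))
     = (\<Sum>e\<le>Suc n. real (Suc n choose e) * 2^(Suc n-e) * g e)"
    by (subst sum.atMost_Suc_shift) (simp add: sum.distrib algebra_simps)
  finally show ?case .
qed

lemma bec_eq:
  assumes "z \<in> out_words n"
  shows "bec p n x z = (if agr z x then p ^ cnt z * (1-p) ^ (n - cnt z) else 0)"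
proof -
  have lz: "length z = n" using assms by (simp add: out_words_def)
  define E where "E = {i. i < n \<and> z!i = 2}"
  have cE: "cnt z = card E" unfolding cnt_def E_def length_filter_conv_card lz ..
  have Esub: "E \<subseteq> {..<n}" by (auto simp: E_def)
  show ?thesis
  proof (cases "agr z x")
    case True
    have "bec p n x z = (\<Prod>i<n. if z!i = 2 then p else 1-p)"
      unfolding bec_def using True lz by (intro prod.cong) (auto simp: agr_def)
    also have "\<dots> = (\<Prod>i\<in>{..<n} \<inter> {i. z!i=2}. p) * (\<Prod>i\<in>{..<n} \<inter> - {i. z!i=2}. 1-p)"
      by (simp add: prod.If_cases)
    also have "{..<n} \<inter> {i. z!i=2} = E" by (auto simp: E_def)
    also have "{..<n} \<inter> - {i. z!i=2} = {..<n} - E" by (auto simp: E_def)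
    also have "(\<Prod>i\<in>E. p) * (\<Prod>i\<in>{..<n} - E. 1-p) = p ^ cnt z * (1-p) ^ (n - cnt z)"
      using Esub by (simp add: cE card_Diff_subset finite_subset)
    finally show ?thesis using True by simp
  next
    case False
    then obtain i where i: "i < n" "z!i \<noteq> 2" "x!i \<noteq> z!i" using lz by (auto simp: agr_def)
    have "bec p n x z = 0" unfolding bec_def
      by (rule prod_zero[OF finite_lessThan], rule bexI[of _ i]) (use i in auto)
    then show ?thesis using False by simp
  qed
qed

lemma length_vadd[simp]: "length (vadd x y) = min (length x) (length y)"
  by (simp add: vadd_def)

lemma nth_vadd: "i < length x \<Longrightarrow> i < length y \<Longrightarrow> vadd x y ! i = (x!i + y!i) mod 2"
  by (simp add: vadd_def)

lemma bw_len: "x \<in> bin_words n \<Longrightarrow> length x = n"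
  by (simp add: bin_words_def)

lemma bw_nth: "x \<in> bin_words n \<Longrightarrow> i < n \<Longrightarrow> x!i = 0 \<or> x!i = 1"
  by (auto simp: bin_words_nth)

lemma vadd_bw: "x \<in> bin_words n \<Longrightarrow> y \<in> bin_words n \<Longrightarrow> vadd x y \<in> bin_words n"
  unfolding bin_words_nth by (auto simp: nth_vadd)

lemma coset_sub:
  assumes "binary_linear_code n C" "a \<in> bin_words n"
  shows "coset C a \<subseteq> bin_words n"
  using assms by (auto simp: coset_def binary_linear_code_def intro!: vadd_bw)

lemma vadd_inj:
  assumes "binary_linear_code n C" "a \<in> bin_words n"
  shows "inj_on (vadd a) C"
proof
  fix x y assume xy: "x \<in> C" "y \<in> C" "vadd a x = vadd a y"
  have bw: "x \<in> bin_words n" "y \<in> bin_words n" using xy assms by (auto simp: binary_linear_code_def)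
  show "x = y"
  proof (rule nth_equalityI)
    show "length x = length y" using bw by (simp add: bw_len)
    fix i assume "i < length x"
    hence i: "i < n" using bw by (simp add: bw_len)
    have "vadd a x ! i = vadd a y ! i" using xy by simp
    hence "(a!i + x!i) mod 2 = (a!i + y!i) mod 2" using bw assms(2) i by (simp add: nth_vadd bw_len)
    then show "x!i = y!i" using bw_nth[OF bw(1) i] bw_nth[OF bw(2) i] bw_nth[OF assms(2) i] by auto
  qed
qed

lemma coset_card:
  assumes "binary_linear_code n C" "a \<in> bin_words n"
  shows "card (coset C a) = card C"
  unfolding coset_def using card_image[OF vadd_inj[OF assms]] .

lemma coset_self:
  assumes "binary_linear_code n C" "a \<in> bin_words n"
  shows "a \<in> coset C a"
proof -
  have "vadd a (replicate n 0) = a" using assms(2)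
    by (intro nth_equalityI) (auto simp: bw_len nth_vadd dest: bw_nth)
  moreover have "replicate n 0 \<in> C" using assms(1) by (simp add: binary_linear_code_def)
  ultimately show ?thesis unfolding coset_def by force
qed

lemma coset_ham:
  assumes "binary_linear_code n C" "a \<in> bin_words n"
    and "x \<in> coset C a" "y \<in> coset C a" "x \<noteq> y"
  shows "min_dist n C \<le> hamming x y"
proof -
  obtain c1 c2 where c: "c1 \<in> C" "c2 \<in> C" "x = vadd a c1" "y = vadd a c2"
    using assms(3,4) by (auto simp: coset_def)
  have bw: "c1 \<in> bin_words n" "c2 \<in> bin_words n" using c assms(1) by (auto simp: binary_linear_code_def)
  have ne: "c1 \<noteq> c2" using c assms(5) by auto
  have "{i. i < length x \<and> x!i \<noteq> y!i} = {i. i < length c1 \<and> c1!i \<noteq> c2!i}"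
  proof (rule Collect_cong)
    fix i
    show "(i < length x \<and> x!i \<noteq> y!i) = (i < length c1 \<and> c1!i \<noteq> c2!i)"
    proof (cases "i < n")
      case True
      then show ?thesis using c bw assms(2) bw_nth[OF bw(1) True] bw_nth[OF bw(2) True] bw_nth[OF assms(2) True]
        by (auto simp: bw_len nth_vadd)
    qed (use c bw assms(2) in \<open>auto simp: bw_len\<close>)
  qed
  hence h: "hamming x y = hamming c1 c2" by (simp add: hamming_def)
  have fin: "finite C" using assms(1) finite_subset[of C "bin_words n"]
    finite_lists_length_eq[of "{0::nat,1}" n]
    by (auto simp: binary_linear_code_def bin_words_def conj_commute)
  have "finite ({hamming x y | x y. x \<in> C \<and> y \<in> C \<and> x \<noteq> y} \<union> {n + 1})"
  proof -
    have "{hamming x y | x y. x \<in> C \<and> y \<in> C \<and> x \<noteq> y} \<subseteq> (\<lambda>(x,y). hamming x y) ` (C \<times> C)"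
      by auto
    moreover have "finite ((\<lambda>(x,y). hamming x y) ` (C \<times> C))" using fin by simp
    ultimately show ?thesis by (auto intro: finite_subset)
  qed
  then have "min_dist n C \<le> hamming c1 c2" unfolding min_dist_def
    by (rule Min_le) (use c ne in auto)
  then show ?thesis using h by simp
qed

lemma coset_disj:
  assumes "binary_linear_code n C" "a \<in> bin_words n" "b \<in> bin_words n"
    and "x \<in> coset C a" "x \<in> coset C b"
  shows "coset C a \<subseteq> coset C b"
proof
  fix y assume "y \<in> coset C a"
  then obtain c where c: "c \<in> C" "y = vadd a c" by (auto simp: coset_def)
  obtain c1 c2 where c12: "c1 \<in> C" "c2 \<in> C" "x = vadd a c1" "x = vadd b c2"
    using assms(4,5) by (auto simp: coset_def)
  have cl: "\<forall>u\<in>C. \<forall>v\<in>C. vadd u v \<in> C" and sub: "C \<subseteq> bin_words n"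
    using assms(1) by (auto simp: binary_linear_code_def)
  let ?d = "vadd c2 (vadd c1 c)"
  have d: "?d \<in> C" using cl c c12 by blast
  have bw: "c \<in> bin_words n" "c1 \<in> bin_words n" "c2 \<in> bin_words n" using sub c c12 by auto
  have "y = vadd b ?d"
  proof (rule nth_equalityI)
    show "length y = length (vadd b ?d)" using c bw assms by (simp add: bw_len)
    fix i assume "i < length y"
    hence i: "i < n" using c bw assms by (simp add: bw_len)
    have "vadd a c1 ! i = vadd b c2 ! i" using c12 by simp
    hence e: "(a!i + c1!i) mod 2 = (b!i + c2!i) mod 2"
      using bw assms i by (simp add: nth_vadd bw_len)
    show "y!i = vadd b ?d ! i"
      using e bw_nth[OF bw(1) i] bw_nth[OF bw(2) i] bw_nth[OF bw(3) i] bw_nth[OF assms(2) i] bw_nth[OF assms(3) i]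
        c bw assms i by (auto simp: nth_vadd bw_len)
  qed
  then show "y \<in> coset C b" using d by (auto simp: coset_def)
qed

lemma ham_le:
  assumes "length x = n" "finite W" "\<forall>i<n. i \<notin> W \<longrightarrow> x!i = y!i"
  shows "hamming x y \<le> card W"
  unfolding hamming_def using assms by (intro card_mono) auto

lemma fin_bw: "finite (bin_words n)"
  unfolding bin_words_def using finite_lists_length_eq[of "{0::nat,1}" n] by (simp add: conj_commute)

lemma N_eq_ZW:
  assumes blc: "binary_linear_code n C" and md: "min_dist n C = k + 1"
    and cC: "card C = 2 ^ (n - k)" and kn: "k \<le> n"
    and a: "a \<in> bin_words n" and z: "z \<in> out_words n"
    and W: "W \<subseteq> {i. i < n \<and> z!i = 2}" "card W = k" "finite W"
  shows "card {x\<in>coset C a. agr z x} = card {y\<in>{y\<in>bin_words n. \<forall>i\<in>W. y!i = 0}. agr z y}"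
proof -
  define \<pi> where "\<pi> x = map (\<lambda>i. if i\<in>W then 0 else x!i) [0..<n]" for x :: "nat list"
  define ZW where "ZW = {y\<in>bin_words n. \<forall>i\<in>W. y!i = 0}"
  define D where "D = coset C a"
  have Dbw: "D \<subseteq> bin_words n" unfolding D_def using coset_sub[OF blc a] .
  have lz: "length z = n" using z by (simp add: out_words_def)
  have Wn: "W \<subseteq> {..<n}" using W by auto
  have pinth: "i < n \<Longrightarrow> \<pi> x ! i = (if i\<in>W then 0 else x!i)" for x i by (simp add: \<pi>_def)
  have inj: "inj_on \<pi> D"
  proof
    fix x y assume xy: "x \<in> D" "y \<in> D" "\<pi> x = \<pi> y"
    show "x = y"
    proof (rule ccontr)
      assume ne: "x \<noteq> y"
      have "\<forall>i<n. i \<notin> W \<longrightarrow> x!i = y!i"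
        using xy(3) pinth by (metis)
      hence "hamming x y \<le> card W" using ham_le[of x n W y] xy Dbw W(3) by (auto simp: bw_len)
      moreover have "min_dist n C \<le> hamming x y" using coset_ham[OF blc a] xy ne by (auto simp: D_def)
      ultimately show False using md W(2) by simp
    qed
  qed
  have img: "\<pi> ` D \<subseteq> ZW"
  proof
    fix y assume "y \<in> \<pi> ` D"
    then obtain x where x: "x \<in> D" "y = \<pi> x" by auto
    have "x \<in> bin_words n" using x Dbw by auto
    then show "y \<in> ZW" unfolding ZW_def bin_words_nth using x Wn by (auto simp: pinth \<pi>_def subset_iff)
  qed
  have cZW: "card ZW = 2 ^ (n - k)"
  proof -
    have "{y\<in>bin_words n. \<forall>i\<in>W. y!i = 0} = {x \<in> bin_words n. \<forall>i\<in>W. x ! i = replicate n 0 ! i}"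
      using Wn by auto
    moreover have "\<forall>i\<in>W. replicate n 0 ! i \<in> {0::nat,1}" using Wn by auto
    ultimately show ?thesis unfolding ZW_def using card_fixed[OF Wn, of "replicate n 0"] W(2) by simp
  qed
  have finZW: "finite ZW" unfolding ZW_def using fin_bw by simp
  have "card (\<pi> ` D) = card ZW" using card_image[OF inj] cZW cC coset_card[OF blc a] by (simp add: D_def)
  hence piD: "\<pi> ` D = ZW" using card_subset_eq[OF finZW img] by simp
  have agr_pi: "x \<in> D \<Longrightarrow> agr z (\<pi> x) = agr z x" for x
    using W(1) lz by (auto simp: agr_def pinth)
  have "\<pi> ` {x\<in>D. agr z x} = {y\<in>ZW. agr z y}"
    using piD agr_pi by auto
  moreover have "card (\<pi> ` {x\<in>D. agr z x}) = card {x\<in>D. agr z x}"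
    by (rule card_image) (rule inj_on_subset[OF inj], auto)
  ultimately show ?thesis by (simp add: D_def ZW_def)
qed

lemma cnt_card: "z \<in> out_words n \<Longrightarrow> cnt z = card {i. i < n \<and> z!i = 2}"
  unfolding cnt_def length_filter_conv_card by (simp add: out_words_def)

lemma N_const:
  assumes blc: "binary_linear_code n C" and md: "min_dist n C = k + 1"
    and cC: "card C = 2 ^ (n - k)" and kn: "k \<le> n"
    and a: "a \<in> bin_words n" and b: "b \<in> bin_words n" and z: "z \<in> out_words n"
    and kz: "k \<le> cnt z"
  shows "card {x\<in>coset C a. agr z x} = card {x\<in>coset C b. agr z x}"
proof -
  obtain W where W: "W \<subseteq> {i. i < n \<and> z!i = 2}" "card W = k" "finite W"
    using obtain_subset_with_card_n[of k "{i. i < n \<and> z!i = 2}"] kz cnt_card[OF z] by auto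
  show ?thesis using N_eq_ZW[OF blc md cC kn a z W] N_eq_ZW[OF blc md cC kn b z W] by simp
qed

lemma N_le1:
  assumes blc: "binary_linear_code n C" and md: "min_dist n C = k + 1"
    and a: "a \<in> bin_words n" and z: "z \<in> out_words n"
    and kz: "cnt z < k"
  shows "card {x\<in>coset C a. agr z x} \<le> 1"
proof -
  have lz: "length z = n" using z by (simp add: out_words_def)
  have fin: "finite {x\<in>coset C a. agr z x}"
    using coset_sub[OF blc a] fin_bw by (auto intro: finite_subset)
  have "x = y" if xy: "x \<in> coset C a" "y \<in> coset C a" "agr z x" "agr z y" for x y
  proof (rule ccontr)
    assume ne: "x \<noteq> y"
    have bw: "x \<in> bin_words n" "y \<in> bin_words n" using xy coset_sub[OF blc a] by auto
    have "\<forall>i<n. i \<notin> {i. i < n \<and> z!i = 2} \<longrightarrow> x!i = y!i"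
      using xy(3,4) lz by (auto simp: agr_def)
    hence "hamming x y \<le> cnt z" using ham_le[of x n "{i. i < n \<and> z!i = 2}" y] bw
      by (simp add: bw_len cnt_card[OF z])
    moreover have "min_dist n C \<le> hamming x y" using coset_ham[OF blc a] xy ne by auto
    ultimately show False using md kz by simp
  qed
  then show ?thesis using fin by (auto simp: card_le_Suc0_iff_eq)
qed

lemma abs_sum01:
  fixes N :: "'m \<Rightarrow> real" and K :: real
  assumes fin: "finite M" and N01: "\<forall>m\<in>M. N m = 0 \<or> N m = 1" and K: "real (card M) = K" "K > 0"
  shows "(\<Sum>m\<in>M. \<bar>N m - (\<Sum>m'\<in>M. N m') / K\<bar>) = 2 * (\<Sum>m\<in>M. N m) * (1 - (\<Sum>m\<in>M. N m) / K)"
proof -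
  define M1 where "M1 = {m\<in>M. N m = 1}"
  define T where "T = (\<Sum>m\<in>M. N m)"
  have "T = (\<Sum>m\<in>M. if N m = 1 then 1 else 0)"
    unfolding T_def by (rule sum.cong) (use N01 in auto)
  also have "\<dots> = real (card M1)" by (simp add: sum.If_cases fin M1_def Int_def)
  finally have T: "T = real (card M1)" .
  have M1sub: "M1 \<subseteq> M" by (auto simp: M1_def)
  have cle: "card M1 \<le> card M" using card_mono[OF fin M1sub] .
  have cM0: "real (card (M - M1)) = K - card M1" using card_Diff_subset[OF finite_subset[OF M1sub fin] M1sub] K cle by (simp add: of_nat_diff)
  have TK: "T \<le> K" using T card_mono[OF fin M1sub] K by simp
  have "(\<Sum>m\<in>M. \<bar>N m - T / K\<bar>) = (\<Sum>m\<in>M. if N m = 1 then 1 - T/K else T/K)"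
  proof (rule sum.cong)
    fix m assume "m \<in> M"
    then show "\<bar>N m - T / K\<bar> = (if N m = 1 then 1 - T/K else T/K)"
      using N01 TK K T by (auto simp: field_simps)
  qed simp
  also have "\<dots> = (\<Sum>m\<in>M \<inter> {m. N m = 1}. 1 - T/K) + (\<Sum>m\<in>M \<inter> - {m. N m = 1}. T/K)"
    by (rule sum.If_cases[OF fin])
  also have "M \<inter> {m. N m = 1} = M1" by (auto simp: M1_def)
  also have "M \<inter> - {m. N m = 1} = M - M1" by (auto simp: M1_def)
  also have "(\<Sum>m\<in>M1. 1 - T/K) + (\<Sum>m\<in>M - M1. T/K) = real (card M1) * (1 - T/K) + real (card (M - M1)) * (T/K)"
    by simp
  also have "\<dots> = 2 * T * (1 - T / K)"
    unfolding cM0 using T TK K by (simp add: field_simps)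
  finally show ?thesis unfolding T_def .
qed

theorem theorem2:
  fixes p :: real and n k :: nat and C0 :: "nat list set"
    and msgs :: "'m set" and enc :: "'m \<Rightarrow> nat list set"
  assumes "0 \<le> p" and "p < 1"
    and "1 \<le> k" and "k \<le> n"
    and "binary_linear_code n C0"
    and "code_dim C0 (n - k)"
    and "min_dist n C0 = k + 1"
    and "finite msgs" and "card msgs = 2 ^ k"
    and "bij_betw enc msgs (cosets n C0)"
  shows "tv_leak p n C0 msgs enc =
    (\<Sum>e=0..k-1. (1 - 1 / 2 ^ (k - e)) * real (n choose e) * p ^ e * (1 - p) ^ (n - e))"
proof -
  note blc = assms(5) and md = assms(7) and finM = assms(8)
  have cC: "card C0 = 2 ^ (n - k)" using assms(6) by (simp add: code_dim_def)
  have kn: "k \<le> n" by fact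
  have img: "enc ` msgs = cosets n C0" and inj: "inj_on enc msgs"
    using assms(10) by (auto simp: bij_betw_def)
  have enc_cos: "\<exists>a\<in>bin_words n. enc m = coset C0 a" if "m \<in> msgs" for m
  proof -
    have "enc m \<in> coset C0 ` bin_words n" using img that by (auto simp: cosets_def)
    then show ?thesis by auto
  qed
  define K :: real where "K = 2 ^ k"
  define L :: real where "L = 2 ^ (n - k)"
  define q where "q e = p ^ e * (1 - p) ^ (n - e)" for e
  define N where "N m z = real (card {x\<in>enc m. agr z x})" for m z
  have Kpos: "K > 0" and Lpos: "L > 0" by (auto simp: K_def L_def)
  have cardM: "real (card msgs) = K" using assms(9) by (simp add: K_def)
  have qnn: "q e \<ge> 0" for e using assms(1,2) by (simp add: q_def)
  have enc_bw: "enc m \<subseteq> bin_words n" if "m \<in> msgs" for m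
    using enc_cos[OF that] coset_sub[OF blc] by auto
  have enc_card: "real (card (enc m)) = L" if "m \<in> msgs" for m
    using enc_cos[OF that] coset_card[OF blc] cC by (auto simp: L_def)
  have enc_fin: "finite (enc m)" if "m \<in> msgs" for m
    using enc_bw[OF that] fin_bw by (auto intro: finite_subset)
  have joint: "joint_MZ p n C0 msgs enc m z = 1 / K * (1 / L * q (cnt z) * N m z)"
    if m: "m \<in> msgs" and z: "z \<in> out_words n" for m z
  proof -
    have "(\<Sum>x\<in>enc m. 1 / real (card (enc m)) * bec p n x z)
        = (\<Sum>x\<in>enc m. if agr z x then 1 / L * q (cnt z) else 0)"
      by (rule sum.cong) (auto simp: bec_eq[OF z] enc_card[OF m] q_def)
    also have "\<dots> = (\<Sum>x\<in>{x\<in>enc m. agr z x}. 1 / L * q (cnt z))"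
      by (rule sum.inter_filter[symmetric, OF enc_fin[OF m]])
    also have "\<dots> = 1 / L * q (cnt z) * N m z" by (simp add: N_def)
    finally show ?thesis unfolding joint_MZ_def cardM by simp
  qed
  define T where "T z = (\<Sum>m\<in>msgs. N m z)" for z
  have marg: "marg_Z p n C0 msgs enc z = 1 / K * (1 / L * q (cnt z) * T z)" if z: "z \<in> out_words n" for z
    unfolding marg_Z_def T_def using joint[OF _ z] by (simp add: sum_distrib_left)
  have inner: "(\<Sum>m\<in>msgs. \<bar>joint_MZ p n C0 msgs enc m z - 1 / real (card msgs) * marg_Z p n C0 msgs enc z\<bar>)
      = 1 / K * (1 / L * q (cnt z)) * (\<Sum>m\<in>msgs. \<bar>N m z - T z / K\<bar>)" if z: "z \<in> out_words n" for z
  proof -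
    have "(\<Sum>m\<in>msgs. \<bar>joint_MZ p n C0 msgs enc m z - 1 / real (card msgs) * marg_Z p n C0 msgs enc z\<bar>)
      = (\<Sum>m\<in>msgs. 1 / K * (1 / L * q (cnt z)) * \<bar>N m z - T z / K\<bar>)"
    proof (rule sum.cong)
      fix m assume m: "m \<in> msgs"
      have "joint_MZ p n C0 msgs enc m z - 1 / real (card msgs) * marg_Z p n C0 msgs enc z
          = 1 / K * (1 / L * q (cnt z)) * (N m z - T z / K)"
        unfolding joint[OF m z] marg[OF z] cardM using Kpos Lpos by (simp add: field_simps)
      then show "\<bar>joint_MZ p n C0 msgs enc m z - 1 / real (card msgs) * marg_Z p n C0 msgs enc z\<bar>
          = 1 / K * (1 / L * q (cnt z)) * \<bar>N m z - T z / K\<bar>"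
        using Kpos Lpos qnn[of "cnt z"] by (simp add: abs_mult)
    qed simp
    then show ?thesis by (simp add: sum_distrib_left)
  qed
  define G where "G e = 1 / 2 * (1 / K * (1 / L * q e) * (if e < k then 2 * 2 ^ e * (1 - 2 ^ e / K) else 0))" for e
  have caseA: "(\<Sum>m\<in>msgs. \<bar>N m z - T z / K\<bar>) = 0" if z: "z \<in> out_words n" and kz: "k \<le> cnt z" for z
  proof -
    have "\<bar>N m z - T z / K\<bar> = 0" if m: "m \<in> msgs" for m
    proof -
      have "T z = (\<Sum>m'\<in>msgs. N m z)"
        unfolding T_def
      proof (rule sum.cong)
        fix m' assume m': "m' \<in> msgs"
        obtain a where a: "a \<in> bin_words n" "enc m = coset C0 a" using enc_cos[OF m] by auto
        obtain b where b: "b \<in> bin_words n" "enc m' = coset C0 b" using enc_cos[OF m'] by auto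
        show "N m' z = N m z" unfolding N_def a(2) b(2)
          using N_const[OF blc md cC kn b(1) a(1) z kz] by simp
      qed simp
      then have "T z = K * N m z" using cardM by simp
      then show ?thesis using Kpos by simp
    qed
    then show ?thesis by simp
  qed
  have Tval: "T z = 2 ^ cnt z" if z: "z \<in> out_words n" for z
  proof -
    have lz: "length z = n" using z by (simp add: out_words_def)
    define A where "A m = {x\<in>enc m. agr z x}" for m
    have disj: "\<forall>i\<in>msgs. \<forall>j\<in>msgs. i \<noteq> j \<longrightarrow> A i \<inter> A j = {}"
    proof (intro ballI impI)
      fix i j assume ij: "i \<in> msgs" "j \<in> msgs" "i \<noteq> j"
      obtain a where a: "a \<in> bin_words n" "enc i = coset C0 a" using enc_cos[OF ij(1)] by auto
      obtain b where b: "b \<in> bin_words n" "enc j = coset C0 b" using enc_cos[OF ij(2)] by auto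
      show "A i \<inter> A j = {}"
      proof (rule ccontr)
        assume "A i \<inter> A j \<noteq> {}"
        then obtain x where "x \<in> coset C0 a" "x \<in> coset C0 b" using a b by (auto simp: A_def)
        then have "coset C0 a = coset C0 b" using coset_disj[OF blc a(1) b(1)] coset_disj[OF blc b(1) a(1)] by blast
        then have "enc i = enc j" using a b by simp
        then show False using inj ij by (auto dest: inj_onD)
      qed
    qed
    have un: "(\<Union>m\<in>msgs. A m) = {x\<in>bin_words n. agr z x}"
    proof
      show "(\<Union>m\<in>msgs. A m) \<subseteq> {x\<in>bin_words n. agr z x}" using enc_bw by (auto simp: A_def)
      show "{x\<in>bin_words n. agr z x} \<subseteq> (\<Union>m\<in>msgs. A m)"
      proof
        fix x assume x: "x \<in> {x\<in>bin_words n. agr z x}"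
        have "coset C0 x \<in> enc ` msgs" using x img by (auto simp: cosets_def)
        then obtain m where "m \<in> msgs" "enc m = coset C0 x" by auto
        then show "x \<in> (\<Union>m\<in>msgs. A m)" using coset_self[OF blc] x by (auto simp: A_def)
      qed
    qed
    have "T z = real (\<Sum>m\<in>msgs. card (A m))" unfolding T_def N_def A_def by simp
    also have "(\<Sum>m\<in>msgs. card (A m)) = card (\<Union>m\<in>msgs. A m)"
      using card_UN_disjoint[OF finM _ disj] enc_fin by (simp add: A_def)
    also have "\<dots> = card {x\<in>bin_words n. \<forall>i\<in>{i. i < n \<and> z!i \<noteq> 2}. x!i = z!i}"
      unfolding un using lz by (auto simp: agr_def intro!: arg_cong[where f=card])
    also have "\<dots> = 2 ^ (n - card {i. i < n \<and> z!i \<noteq> 2})"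
      by (rule card_fixed) (use z in \<open>auto simp: out_words_def set_conv_nth\<close>)
    also have "card {i. i < n \<and> z!i \<noteq> 2} = n - cnt z"
    proof -
      have "{i. i < n \<and> z!i \<noteq> 2} = {..<n} - {i. i < n \<and> z!i = 2}" by auto
      moreover have "{i. i < n \<and> z!i = 2} \<subseteq> {..<n}" by auto
      ultimately show ?thesis by (simp add: card_Diff_subset cnt_card[OF z] finite_subset)
    qed
    also have "n - (n - cnt z) = cnt z"
    proof -
      have "card {i. i < n \<and> z!i = 2} \<le> card {..<n}" by (rule card_mono) auto
      then show ?thesis using cnt_card[OF z] by simp
    qed
    finally show ?thesis by simp
  qed
  have caseB: "(\<Sum>m\<in>msgs. \<bar>N m z - T z / K\<bar>) = 2 * 2 ^ cnt z * (1 - 2 ^ cnt z / K)"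
    if z: "z \<in> out_words n" and kz: "cnt z < k" for z
  proof -
    have "\<forall>m\<in>msgs. N m z = 0 \<or> N m z = 1"
    proof
      fix m assume m: "m \<in> msgs"
      obtain a where a: "a \<in> bin_words n" "enc m = coset C0 a" using enc_cos[OF m] by auto
      have "card {x\<in>enc m. agr z x} \<le> 1" using N_le1[OF blc md a(1) z kz] a(2) by simp
      then show "N m z = 0 \<or> N m z = 1" by (auto simp: N_def)
    qed
    from abs_sum01[OF finM this cardM Kpos] show ?thesis using Tval[OF z] by (simp add: T_def)
  qed
  have eachz: "1 / 2 * (\<Sum>m\<in>msgs. \<bar>joint_MZ p n C0 msgs enc m z - 1 / real (card msgs) * marg_Z p n C0 msgs enc z\<bar>)
      = G (cnt z)" if z: "z \<in> out_words n" for z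
    unfolding inner[OF z] G_def using caseA[OF z] caseB[OF z] by (cases "cnt z < k") auto
  have "tv_leak p n C0 msgs enc = 1 / 2 * (\<Sum>z\<in>out_words n. \<Sum>m\<in>msgs. \<bar>joint_MZ p n C0 msgs enc m z - 1 / real (card msgs) * marg_Z p n C0 msgs enc z\<bar>)"
    unfolding tv_leak_def by (subst sum.swap) (rule refl)
  also have "\<dots> = (\<Sum>z\<in>out_words n. 1 / 2 * (\<Sum>m\<in>msgs. \<bar>joint_MZ p n C0 msgs enc m z - 1 / real (card msgs) * marg_Z p n C0 msgs enc z\<bar>))"
    by (rule sum_distrib_left)
  also have "\<dots> = (\<Sum>z\<in>out_words n. G (cnt z))"
    by (rule sum.cong) (rule refl, rule eachz)
  also have "\<dots> = (\<Sum>e\<le>n. real (n choose e) * 2^(n-e) * G e)" by (rule sum_out_words)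
  also have "\<dots> = (\<Sum>e\<le>n. if e < k then (1 - 1 / 2 ^ (k - e)) * real (n choose e) * p ^ e * (1 - p) ^ (n - e) else 0)"
  proof (rule sum.cong)
    fix e assume e: "e \<in> {..n}"
    show "real (n choose e) * 2^(n-e) * G e = (if e < k then (1 - 1 / 2 ^ (k - e)) * real (n choose e) * p ^ e * (1 - p) ^ (n - e) else 0)"
    proof (cases "e < k")
      case True
      have h1: "(2::real)^(n-e) * 2^e = 2^n" using e by (simp flip: power_add)
      have h2: "(2::real)^k * 2^(n-k) = 2^n" using kn by (simp flip: power_add)
      have h3: "(2::real)^e * 2^(k-e) = 2^k" using True by (simp flip: power_add)
      have e1: "(1::real) - 1 / 2 ^ (k - e) = 1 - 2^e / K" unfolding K_def by (simp flip: h3)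
      have r: "(2::real)^(n-e) * (1/2 * (1/K * (1/L * x) * (2*2^e*y))) = ((2^(n-e)*2^e)/(K*L)) * x * y" for x y
        by (simp add: field_simps)
      have r2: "((2::real)^(n-e)*2^e)/(K*L) = 1" unfolding K_def L_def h1 h2 by simp
      have "real (n choose e) * 2^(n-e) * G e = real (n choose e) * (q e * (1 - 2^e / K))"
        unfolding G_def using True r[of "q e" "1 - 2^e / K"] r2 by (simp add: mult.assoc)
      then show ?thesis using True e1 unfolding q_def by (simp add: mult_ac)
    qed (simp add: G_def)
  qed simp
  also have "\<dots> = (\<Sum>e\<in>{..n} \<inter> {e. e < k}. (1 - 1 / 2 ^ (k - e)) * real (n choose e) * p ^ e * (1 - p) ^ (n - e))"
    by (simp add: sum.inter_restrict)
  also have "{..n} \<inter> {e. e < k} = {0..k-1}" using assms(3,4) by auto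
  finally show ?thesis .
qed

end
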